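(* Under the setting in the context, if $\langle\overline{\mathbf V}_{\boldsymbol\xi}\tilde{\mathbf u},\tilde{\mathbf u}\rangle=0$, then $n^{-1}\sum_{k=1}^nV_k^2\to\mathbb E(\langle\tilde{\mathbf u},\boldsymbol\varepsilon_1\rangle^2)$ almost surely as $n\to\infty$, and $\mathbb E(\langle\tilde{\mathbf u},\boldsymbol\varepsilon_1\rangle^2)=0$ holds if and only if $X_{k,1}=X_{k,2}$ almost surely for all $k\in\mathbb N$.
   Context: Setting: $\mathbf X_k=(X_{k,1},X_{k,2})^\top$, $\mathbf X_0=\mathbf 0$, and for $k\in\mathbb N$, $\mathbf X_k=\sum_{j=1}^{X_{k-1,1}}\boldsymbol\xi_{k,j,1}+\sum_{j=1}^{X_{k-1,2}}\boldsymbol\xi_{k,j,2}+\boldsymbol\varepsilon_k$, where $\{\boldsymbol\xi_{k,j,i},\boldsymbol\varepsilon_k:k,j\in\mathbb N,i\in\{1,2\}\}$ are independent $\mathbb Z_+^2$-valued random vectors and each of the families $\{\boldsymbol\xi_{k,j,1}\}$, $\{\boldsymbol\xi_{k,j,2}\}$, $\{\boldsymbol\varepsilon_k\}$ is identically distributed. $\mathbb E\boldsymbol\xi_{1,1,1}=(\alpha,\beta)^\top$, $\mathbb E\boldsymbol\xi_{1,1,2}=(\beta,\alpha)^\top$, with $(\alpha,\beta)\in(0,1)^2$, $\alpha+\beta=1$. Assume $\mathbb E\|\boldsymbol\xi_{1,1,1}\|^8,\mathbb E\|\boldsymbol\xi_{1,1,2}\|^8,\mathbb E\|\boldsymbol\varepsilon_1\|^8<\infty$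 and $\mathbb E\boldsymbol\varepsilon_1\neq\mathbf 0$. $\mathbf V_{\boldsymbol\xi_i}=\operatorname{Var}(\boldsymbol\xi_{1,1,i})$, $\overline{\mathbf V}_{\boldsymbol\xi}=\frac12(\mathbf V_{\boldsymbol\xi_1}+\mathbf V_{\boldsymbol\xi_2})$, $\tilde{\mathbf u}=(1,-1)^\top$, $V_k=X_{k,1}-X_{k,2}$. *)

theory Defs
  imports "HOL-Probability.Probability"
begin

definition vec2 :: "nat \<times> nat \<Rightarrow> real ^ 2" where
  "vec2 p = vector [real (fst p), real (snd p)]"

definition utilde :: "real ^ 2" where
  "utilde = vector [1, -1]"

definition cov_matrix :: "'a measure \<Rightarrow> ('a \<Rightarrow> real ^ 2) \<Rightarrow> real ^ 2 ^ 2" where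
  "cov_matrix M Z = (\<chi> i j. integral\<^sup>L M (\<lambda>\<omega>.
      (Z \<omega> $ i - integral\<^sup>L M (\<lambda>\<omega>'. Z \<omega>' $ i)) * (Z \<omega> $ j - integral\<^sup>L M (\<lambda>\<omega>'. Z \<omega>' $ j))))"

text \<open>The two-type branching process with immigration:
  \<open>X_0 = 0\<close>, \<open>X_k = \<Sum>_{j=1}^{X_{k-1,1}} \<xi>_{k,j,1} + \<Sum>_{j=1}^{X_{k-1,2}} \<xi>_{k,j,2} + \<epsilon>_k\<close>.
  \<open>\<xi>1 k j\<close> is \<open>\<xi>_{k,j,1}\<close>, \<open>\<xi>2 k j\<close> is \<open>\<xi>_{k,j,2}\<close>.\<close>
fun gwi :: "(nat \<Rightarrow> nat \<Rightarrow> 'a \<Rightarrow> nat \<times> nat) \<Rightarrow> (nat \<Rightarrow> nat \<Rightarrow> 'a \<Rightarrow> nat \<times> nat)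
             \<Rightarrow> (nat \<Rightarrow> 'a \<Rightarrow> nat \<times> nat) \<Rightarrow> nat \<Rightarrow> 'a \<Rightarrow> nat \<times> nat" where
  "gwi \<xi>1 \<xi>2 \<epsilon> 0 \<omega> = (0, 0)"
| "gwi \<xi>1 \<xi>2 \<epsilon> (Suc k) \<omega> =
     (let s = gwi \<xi>1 \<xi>2 \<epsilon> k \<omega> in
       ((\<Sum>j\<in>{1..fst s}. fst (\<xi>1 (Suc k) j \<omega>)) + (\<Sum>j\<in>{1..snd s}. fst (\<xi>2 (Suc k) j \<omega>))
          + fst (\<epsilon> (Suc k) \<omega>),
        (\<Sum>j\<in>{1..fst s}. snd (\<xi>1 (Suc k) j \<omega>)) + (\<Sum>j\<in>{1..snd s}. snd (\<xi>2 (Suc k) j \<omega>))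
          + snd (\<epsilon> (Suc k) \<omega>)))"

text \<open>Index set of the whole family of offspring and immigration vectors:
  \<open>Inl (k,j,i)\<close> stands for \<open>\<xi>_{k,j,i}\<close> (\<open>k,j \<ge> 1\<close>, \<open>i \<in> {1,2}\<close>), \<open>Inr k\<close> for \<open>\<epsilon>_k\<close> (\<open>k \<ge> 1\<close>).\<close>
definition gwi_index :: "((nat \<times> nat \<times> nat) + nat) set" where
  "gwi_index = {Inl (k, j, i) | k j i. k \<ge> 1 \<and> j \<ge> 1 \<and> i \<in> {1, 2}} \<union> {Inr k | k. k \<ge> 1}"

definition gwi_family ::
  "(nat \<Rightarrow> nat \<Rightarrow> 'a \<Rightarrow> nat \<times> nat) \<Rightarrow> (nat \<Rightarrow> nat \<Rightarrow> 'a \<Rightarrow> nat \<times> nat)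
    \<Rightarrow> (nat \<Rightarrow> 'a \<Rightarrow> nat \<times> nat) \<Rightarrow> ((nat \<times> nat \<times> nat) + nat) \<Rightarrow> 'a \<Rightarrow> nat \<times> nat" where
  "gwi_family \<xi>1 \<xi>2 \<epsilon> x = (case x of
      Inl (k, j, i) \<Rightarrow> (if i = 1 then \<xi>1 k j else \<xi>2 k j)
    | Inr k \<Rightarrow> \<epsilon> k)"

end

theory Submission
  imports Defs
begin


lemma pow4_add_le: "((a::real) + b) ^ 4 \<le> 8 * (a ^ 4 + b ^ 4)"
proof -
  have h1: "(a + b)^2 \<le> 2 * (a^2 + b^2)" using sum_squares_ge_zero[of "a-b" 0]
    by (simp add: power2_eq_square algebra_simps)
  have h2: "(a^2 + b^2)^2 \<le> 2 * (a^4 + b^4)"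
    using zero_le_square[of "a^2 - b^2"] by (simp add: power2_eq_square algebra_simps power4_eq_xxxx)
  have "(a+b)^4 = ((a+b)^2)^2" by simp
  also have "\<dots> \<le> (2 * (a^2 + b^2))^2" using h1 by (intro power_mono) auto
  also have "\<dots> = 4 * (a^2+b^2)^2" by (simp add: power2_eq_square algebra_simps)
  also have "\<dots> \<le> 8 * (a ^ 4 + b ^ 4)" using h2 by simp
  finally show ?thesis .
qed

lemma low_pow_bound: "(j::nat) \<le> 4 \<Longrightarrow> \<bar>(x::real) ^ j\<bar> \<le> 1 + x ^ 4"
proof (cases "\<bar>x\<bar> \<le> 1")
  case True
  assume "j \<le> 4"
  have "\<bar>x^j\<bar> \<le> 1" using True by (simp add: power_le_one power_abs)
  moreover have "0 \<le> x^4" by (simp add: zero_le_even_power)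
  ultimately show ?thesis by linarith
next
  case False
  assume j: "j \<le> 4"
  have "\<bar>x\<bar>^j \<le> \<bar>x\<bar>^4" using False j by (intro power_increasing) auto
  moreover have "\<bar>x\<bar>^4 = x^4" by (simp add: power_abs[symmetric] zero_le_even_power)
  ultimately show ?thesis by (simp add: power_abs)
qed

lemma (in prob_space) integrable_low_pow:
  fixes f :: "'a \<Rightarrow> real"
  assumes [measurable]: "f \<in> borel_measurable M" and i4: "integrable M (\<lambda>x. f x ^ 4)" and j: "j \<le> 4"
  shows "integrable M (\<lambda>x. f x ^ j)"
proof (rule Bochner_Integration.integrable_bound[where f="\<lambda>x. 1 + f x ^ 4"])
  show "integrable M (\<lambda>x. 1 + f x ^ 4)" using i4 by simp
  show "(\<lambda>x. f x ^ j) \<in> borel_measurable M" by measurable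
  show "AE x in M. norm (f x ^ j) \<le> norm (1 + f x ^ 4)"
    using low_pow_bound[OF j] by (auto simp: zero_le_even_power)
qed

lemma (in prob_space) slln4:
  fixes Y :: "nat \<Rightarrow> 'a \<Rightarrow> real"
  assumes ind: "indep_vars (\<lambda>_. borel) Y UNIV"
    and idd: "\<And>k. distr M borel (Y k) = distr M borel (Y 0)"
    and int4: "integrable M (\<lambda>\<omega>. Y 0 \<omega> ^ 4)"
  shows "AE \<omega> in M. (\<lambda>n. (\<Sum>k<n. Y k \<omega>) / real n) \<longlonglongrightarrow> expectation (Y 0)"
proof -
  have rv[measurable]: "\<And>k. Y k \<in> borel_measurable M" using ind by (auto simp: indep_vars_def)
  have momi: "integrable M (\<lambda>\<omega>. g (Y k \<omega>)) \<longleftrightarrow> integrable M (\<lambda>\<omega>. g (Y 0 \<omega>))"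
    if g[measurable]: "g \<in> borel_measurable borel" for k and g :: "real \<Rightarrow> real"
  proof -
    have "integrable M (\<lambda>\<omega>. g (Y k \<omega>)) \<longleftrightarrow> integrable (distr M borel (Y k)) g"
      by (simp add: integrable_distr_eq)
    also have "\<dots> \<longleftrightarrow> integrable (distr M borel (Y 0)) g" by (subst idd) (rule refl)
    also have "\<dots> \<longleftrightarrow> integrable M (\<lambda>\<omega>. g (Y 0 \<omega>))" by (simp add: integrable_distr_eq)
    finally show ?thesis .
  qed
  have mome: "expectation (\<lambda>\<omega>. g (Y k \<omega>)) = expectation (\<lambda>\<omega>. g (Y 0 \<omega>))"
    if g[measurable]: "g \<in> borel_measurable borel" for k and g :: "real \<Rightarrow> real"
  proof -
    have "expectation (\<lambda>\<omega>. g (Y k \<omega>)) = integral\<^sup>L (distr M borel (Y k)) g"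
      by (simp add: integral_distr)
    also have "\<dots> = integral\<^sup>L (distr M borel (Y 0)) g" by (subst idd) (rule refl)
    also have "\<dots> = expectation (\<lambda>\<omega>. g (Y 0 \<omega>))" by (simp add: integral_distr)
    finally show ?thesis .
  qed
  define mu where "mu = expectation (Y 0)"
  define Z where "Z k \<omega> = Y k \<omega> - mu" for k \<omega>
  have Zm[measurable]: "\<And>k. Z k \<in> borel_measurable M" unfolding Z_def by measurable
  have Z0i4: "integrable M (\<lambda>\<omega>. Z 0 \<omega> ^ 4)"
  proof (rule Bochner_Integration.integrable_bound[where f="\<lambda>\<omega>. 8 * (Y 0 \<omega> ^ 4 + (- mu) ^ 4)"])
    show "integrable M (\<lambda>\<omega>. 8 * (Y 0 \<omega> ^ 4 + (- mu) ^ 4))" using int4 by simp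
    show "(\<lambda>\<omega>. Z 0 \<omega> ^ 4) \<in> borel_measurable M" by measurable
    show "AE x in M. norm (Z 0 x ^ 4) \<le> norm (8 * (Y 0 x ^ 4 + (- mu) ^ 4))"
      using pow4_add_le[of "Y 0 _" "-mu"]
      by (auto simp: Z_def zero_le_even_power)
  qed
  have Zi4: "integrable M (\<lambda>\<omega>. Z k \<omega> ^ 4)" for k
    using momi[of "\<lambda>x. (x - mu)^4" k] Z0i4 by (simp add: Z_def)
  have Zi: "integrable M (\<lambda>\<omega>. Z k \<omega> ^ j)" if "j \<le> 4" for k j
    using integrable_low_pow[OF Zm Zi4 that] .
  have Zmom: "expectation (\<lambda>\<omega>. Z k \<omega> ^ j) = expectation (\<lambda>\<omega>. Z 0 \<omega> ^ j)" for k j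
    using mome[of "\<lambda>x. (x - mu)^j" k] by (simp add: Z_def)
  have Y0i: "integrable M (Y 0)" using integrable_low_pow[OF rv int4, of 1] by simp
  have EZ0: "expectation (Z k) = 0" for k
  proof -
    have "expectation (Z k) = expectation (\<lambda>\<omega>. Z 0 \<omega> ^ 1)" using Zmom[of k 1] by simp
    also have "\<dots> = expectation (Y 0) - mu" unfolding Z_def using Y0i by (simp add: prob_space)
    finally show ?thesis by (simp add: mu_def)
  qed
  define S where "S n \<omega> = (\<Sum>k<n. Z k \<omega>)" for n \<omega>
  have Sm[measurable]: "\<And>n. S n \<in> borel_measurable M" unfolding S_def by measurable
  have SSuc: "S (Suc n) \<omega> = S n \<omega> + Z n \<omega>" for n \<omega> by (simp add: S_def)
  have Si4: "integrable M (\<lambda>\<omega>. S n \<omega> ^ 4)" for n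
  proof (induction n)
    case 0 then show ?case by (simp add: S_def)
  next
    case (Suc n)
    show ?case
    proof (rule Bochner_Integration.integrable_bound[where f="\<lambda>\<omega>. 8 * (S n \<omega> ^ 4 + Z n \<omega> ^ 4)"])
      show "integrable M (\<lambda>\<omega>. 8 * (S n \<omega> ^ 4 + Z n \<omega> ^ 4))" using Suc Zi4 by simp
      show "(\<lambda>\<omega>. S (Suc n) \<omega> ^ 4) \<in> borel_measurable M" by measurable
      show "AE x in M. norm (S (Suc n) x ^ 4) \<le> norm (8 * (S n x ^ 4 + Z n x ^ 4))"
        using pow4_add_le[of "S n _" "Z n _"] by (auto simp: SSuc zero_le_even_power)
    qed
  qed
  have Si: "integrable M (\<lambda>\<omega>. S n \<omega> ^ j)" if "j \<le> 4" for n j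
    using integrable_low_pow[OF Sm Si4 that] .
  have ES0: "expectation (S n) = 0" for n
  proof -
    have "integrable M (Z k)" for k using Zi[of 1 k] by simp
    then show ?thesis unfolding S_def using EZ0 by (simp add: Bochner_Integration.integral_sum)
  qed
  have indZ: "indep_vars (\<lambda>_. borel) Z UNIV"
    using indep_vars_compose2[OF ind, of "\<lambda>_ x. x - mu" "\<lambda>_. borel"] by (simp add: Z_def[abs_def])
  have indSZ: "indep_var borel (Z n) borel (S n)" for n
    using indep_vars_sum[of "{..<n}" n Z] indep_vars_subset[OF indZ] by (simp add: S_def[abs_def])
  have prodE: "expectation (\<lambda>\<omega>. Z n \<omega> ^ a * S n \<omega> ^ b) = expectation (\<lambda>\<omega>. Z n \<omega> ^ a) * expectation (\<lambda>\<omega>. S n \<omega> ^ b)"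
    and prodI: "integrable M (\<lambda>\<omega>. Z n \<omega> ^ a * S n \<omega> ^ b)"
    if "a \<le> 4" "b \<le> 4" for n a b
  proof -
    have iv: "indep_var borel ((\<lambda>x. x ^ a) \<circ> Z n) borel ((\<lambda>x. x ^ b) \<circ> S n)"
      by (rule indep_var_compose[OF indSZ]) auto
    show "expectation (\<lambda>\<omega>. Z n \<omega> ^ a * S n \<omega> ^ b) = expectation (\<lambda>\<omega>. Z n \<omega> ^ a) * expectation (\<lambda>\<omega>. S n \<omega> ^ b)"
      using indep_var_lebesgue_integral[OF iv] Zi[OF that(1)] Si[OF that(2)] by (simp add: o_def)
    show "integrable M (\<lambda>\<omega>. Z n \<omega> ^ a * S n \<omega> ^ b)"
      using indep_var_integrable[OF iv] Zi[OF that(1)] Si[OF that(2)] by (simp add: o_def)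
  qed
  define s2 where "s2 = expectation (\<lambda>\<omega>. Z 0 \<omega> ^ 2)"
  define m4 where "m4 = expectation (\<lambda>\<omega>. Z 0 \<omega> ^ 4)"
  have s2nn: "0 \<le> s2" unfolding s2_def by (simp add: zero_le_even_power)
  have m4nn: "0 \<le> m4" unfolding m4_def by (simp add: zero_le_even_power)
  have ES2: "expectation (\<lambda>\<omega>. S n \<omega> ^ 2) = real n * s2" for n
  proof (induction n)
    case 0 then show ?case by (simp add: S_def)
  next
    case (Suc n)
    have eq: "(\<lambda>\<omega>. S (Suc n) \<omega> ^ 2) = (\<lambda>\<omega>. S n \<omega> ^ 2 + (2 * (Z n \<omega> ^ 1 * S n \<omega> ^ 1) + Z n \<omega> ^ 2))"
      by (auto simp: SSuc power2_eq_square algebra_simps)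
    have "expectation (\<lambda>\<omega>. S (Suc n) \<omega> ^ 2) = real n * s2 + (2 * (expectation (\<lambda>\<omega>. Z n \<omega> ^ 1) * expectation (\<lambda>\<omega>. S n \<omega> ^ 1)) + s2)"
      unfolding eq
      apply (subst Bochner_Integration.integral_add)
        apply (rule Si; simp)
       apply (intro Bochner_Integration.integrable_add integrable_mult_right prodI Zi; simp)
      apply (subst Bochner_Integration.integral_add)
        apply (intro integrable_mult_right prodI; simp)
       apply (rule Zi; simp)
      apply (simp only: integral_mult_right_zero Suc prodE)
      apply (simp add: s2_def Zmom[of n 2])
      done
    also have "\<dots> = real (Suc n) * s2" using ES0[of n] by (simp add: algebra_simps)
    finally show ?case .
  qed
  define C where "C = 3 * s2^2 + m4"
  have ES4: "expectation (\<lambda>\<omega>. S n \<omega> ^ 4) \<le> C * (real n)^2" for n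
  proof (induction n)
    case 0 then show ?case by (simp add: S_def)
  next
    case (Suc n)
    have eq: "(\<lambda>\<omega>. S (Suc n) \<omega> ^ 4) = (\<lambda>\<omega>. S n \<omega> ^ 4 + (4 * (Z n \<omega> ^ 1 * S n \<omega> ^ 3) + (6 * (Z n \<omega> ^ 2 * S n \<omega> ^ 2) + (4 * (Z n \<omega> ^ 3 * S n \<omega> ^ 1) + Z n \<omega> ^ 4))))"
      by (auto simp: SSuc power4_eq_xxxx power3_eq_cube power2_eq_square algebra_simps)
    have "expectation (\<lambda>\<omega>. S (Suc n) \<omega> ^ 4) = expectation (\<lambda>\<omega>. S n \<omega> ^ 4) + (4 * (expectation (\<lambda>\<omega>. Z n \<omega> ^ 1) * expectation (\<lambda>\<omega>. S n \<omega> ^ 3)) + (6 * (expectation (\<lambda>\<omega>. Z n \<omega> ^ 2) * expectation (\<lambda>\<omega>. S n \<omega> ^ 2)) + (4 * (expectation (\<lambda>\<omega>. Z n \<omega> ^ 3) * expectation (\<lambda>\<omega>. S n \<omega> ^ 1)) + expectation (\<lambda>\<omega>. Z n \<omega> ^ 4))))"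
      unfolding eq
      by (simp only: Bochner_Integration.integral_add integral_mult_right_zero prodE
             Bochner_Integration.integrable_add integrable_mult_right prodI Zi Si
             order_refl numeral_le_iff semiring_norm le_numeral_extra one_le_numeral)
    also have "\<dots> = expectation (\<lambda>\<omega>. S n \<omega> ^ 4) + 6 * real n * s2^2 + m4"
      using ES0[of n] EZ0[of n] ES2[of n] Zmom[of n 2] Zmom[of n 4]
      by (simp add: s2_def m4_def power2_eq_square)
    also have "\<dots> \<le> C * (real n)^2 + 6 * real n * s2^2 + m4" using Suc by simp
    also have "\<dots> \<le> C * (real (Suc n))^2"
      using s2nn m4nn by (simp add: C_def power2_eq_square algebra_simps mult_nonneg_nonneg)
    finally show ?case .
  qed
  define f where "f n \<omega> = (S (Suc n) \<omega> / real (Suc n)) ^ 4" for n \<omega>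
  have fm[measurable]: "\<And>n. f n \<in> borel_measurable M" unfolding f_def by measurable
  have fnn: "0 \<le> f n \<omega>" for n \<omega> unfolding f_def by (simp add: zero_le_even_power)
  have fi: "integrable M (f n)" for n
    unfolding f_def power_divide using Si4[of "Suc n"] by simp
  have Ef: "expectation (f n) \<le> C / real (Suc n) ^ 2" for n
  proof -
    have "expectation (f n) = expectation (\<lambda>\<omega>. S (Suc n) \<omega> ^ 4) / real (Suc n) ^ 4"
      unfolding f_def power_divide by simp
    also have "\<dots> \<le> C * real (Suc n) ^ 2 / real (Suc n) ^ 4"
      by (intro divide_right_mono ES4) simp
    also have "\<dots> = C / real (Suc n) ^ 2"
    proof -
      have "real (Suc n) ^ 4 = real (Suc n) ^ 2 * real (Suc n) ^ 2" by (simp add: power_add[symmetric])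
      moreover have gen: "\<And>a::real. a \<noteq> 0 \<Longrightarrow> C * a / (a * a) = C / a" by simp
      ultimately show ?thesis using gen[of "real (Suc n) ^ 2"] by (simp del: of_nat_Suc)
    qed
    finally show ?thesis .
  qed
  have sumC: "summable (\<lambda>n. C / real (Suc n) ^ 2)"
  proof -
    have "summable (\<lambda>n. inverse (real n ^ 2))" by (rule inverse_power_summable) auto
    then have "summable (\<lambda>n. inverse (real (Suc n) ^ 2))" by (subst summable_Suc_iff)
    then have "summable (\<lambda>n. C * inverse (real (Suc n) ^ 2))" by (rule summable_mult)
    then show ?thesis by (simp add: divide_inverse)
  qed
  have Cnn: "0 \<le> C" unfolding C_def using m4nn by simp
  have "(\<integral>\<^sup>+ \<omega>. (\<Sum>n. ennreal (f n \<omega>)) \<partial>M) = (\<Sum>n. \<integral>\<^sup>+ \<omega>. ennreal (f n \<omega>) \<partial>M)"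
    by (rule nn_integral_suminf) measurable
  also have "\<dots> = (\<Sum>n. ennreal (expectation (f n)))"
    using fi fnn by (simp add: nn_integral_eq_integral)
  also have "\<dots> \<le> (\<Sum>n. ennreal (C / real (Suc n) ^ 2))"
    using Ef by (intro suminf_le) (auto intro: ennreal_leI)
  also have "\<dots> = ennreal (\<Sum>n. C / real (Suc n) ^ 2)"
    using sumC Cnn by (intro suminf_ennreal2) auto
  finally have fin: "(\<integral>\<^sup>+ \<omega>. (\<Sum>n. ennreal (f n \<omega>)) \<partial>M) \<noteq> \<infinity>"
    by (auto simp: top_unique)
  have "AE \<omega> in M. (\<Sum>n. ennreal (f n \<omega>)) \<noteq> \<infinity>"
    by (rule nn_integral_PInf_AE[OF _ fin]) measurable
  then show ?thesis
  proof (rule AE_mp, intro AE_I2 impI)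
    fix \<omega> assume "(\<Sum>n. ennreal (f n \<omega>)) \<noteq> \<infinity>"
    then have "summable (\<lambda>n. f n \<omega>)" using fnn by (intro summable_suminf_not_top) auto
    then have "(\<lambda>n. f n \<omega>) \<longlonglongrightarrow> 0" by (rule summable_LIMSEQ_zero)
    then have "(\<lambda>n. root 4 (f n \<omega>)) \<longlonglongrightarrow> root 4 0" by (intro tendsto_intros)
    then have "(\<lambda>n. \<bar>root 4 (f n \<omega>)\<bar>) \<longlonglongrightarrow> 0" by (simp add: tendsto_rabs_zero)
    moreover have "\<bar>root 4 (f n \<omega>)\<bar> = \<bar>S (Suc n) \<omega> / real (Suc n)\<bar>" for n
      unfolding f_def by (rule root_abs_power) simp
    ultimately have "(\<lambda>n. \<bar>S (Suc n) \<omega> / real (Suc n)\<bar>) \<longlonglongrightarrow> 0" by simp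
    then have "(\<lambda>n. S (Suc n) \<omega> / real (Suc n)) \<longlonglongrightarrow> 0" using tendsto_rabs_zero_iff by blast
    then have "(\<lambda>n. S (Suc n) \<omega> / real (Suc n) + mu) \<longlonglongrightarrow> 0 + mu" by (intro tendsto_intros)
    moreover have "S (Suc n) \<omega> / real (Suc n) + mu = (\<Sum>k<Suc n. Y k \<omega>) / real (Suc n)" for n
    proof -
      have "S (Suc n) \<omega> = (\<Sum>k<Suc n. Y k \<omega>) - real (Suc n) * mu"
        unfolding S_def Z_def by (simp add: sum_subtractf)
      then show ?thesis by (simp add: field_simps)
    qed
    ultimately have "(\<lambda>n. (\<Sum>k<Suc n. Y k \<omega>) / real (Suc n)) \<longlonglongrightarrow> mu" by simp
    then show "(\<lambda>n. (\<Sum>k<n. Y k \<omega>) / real n) \<longlonglongrightarrow> expectation (Y 0)"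
      unfolding mu_def by (rule LIMSEQ_imp_Suc)
  qed
qed

lemma (in prob_space) indep_sets_reindex:
  assumes ind: "indep_sets F I" and inj: "inj_on f J" and sub: "f ` J \<subseteq> I"
  shows "indep_sets (\<lambda>j. F (f j)) J"
  unfolding indep_sets_def
proof (intro conjI ballI allI impI)
  fix j assume "j \<in> J" then show "F (f j) \<subseteq> events" using ind sub by (auto simp: indep_sets_def)
next
  fix K A assume K: "K \<subseteq> J" "K \<noteq> {}" "finite K" and A: "A \<in> (\<Pi> j\<in>K. F (f j))"
  have injK: "inj_on f K" using inj K(1) by (rule inj_on_subset)
  define B where "B i = A (the_inv_into K f i)" for i
  have Bf: "B (f j) = A j" if "j \<in> K" for j using that injK by (simp add: B_def the_inv_into_f_f)
  have "B \<in> (\<Pi> i\<in>f ` K. F i)" using A Bf by auto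
  moreover have "f ` K \<subseteq> I" "f ` K \<noteq> {}" "finite (f ` K)" using K sub by auto
  ultimately have "prob (\<Inter>i\<in>f ` K. B i) = (\<Prod>i\<in>f ` K. prob (B i))"
    using ind unfolding indep_sets_def by blast
  moreover have "(\<Inter>i\<in>f ` K. B i) = (\<Inter>j\<in>K. A j)" using Bf by auto
  moreover have "(\<Prod>i\<in>f ` K. prob (B i)) = (\<Prod>j\<in>K. prob (A j))"
    using Bf injK by (simp add: prod.reindex)
  ultimately show "prob (\<Inter>j\<in>K. A j) = (\<Prod>j\<in>K. prob (A j))" by simp
qed

lemma (in prob_space) indep_vars_reindex:
  assumes ind: "indep_vars M' X I" and inj: "inj_on f J" and sub: "f ` J \<subseteq> I"
  shows "indep_vars (\<lambda>j. M' (f j)) (\<lambda>j. X (f j)) J"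
  using ind sub indep_sets_reindex[OF _ inj sub, of "\<lambda>i. {X i -` A \<inter> space M |A. A \<in> sets (M' i)}"]
  unfolding indep_vars_def2 by auto



lemma vec2_nth[simp]: "vec2 p $ 1 = real (fst p)" "vec2 p $ 2 = real (snd p)"
  by (simp_all add: vec2_def)

lemma utilde_nth[simp]: "utilde $ 1 = 1" "utilde $ 2 = -1"
  by (simp_all add: utilde_def)

lemma utilde_inner: "utilde \<bullet> vec2 p = real (fst p) - real (snd p)"
  by (simp add: inner_vec_def sum_2)

lemma norm_vec2_sq: "norm (vec2 p) ^ 2 = real (fst p) ^ 2 + real (snd p) ^ 2"
  unfolding power2_norm_eq_inner by (simp add: inner_vec_def sum_2 power2_eq_square)

lemma quad_form: "(A *v utilde) \<bullet> utilde = A$1$1 - A$1$2 - A$2$1 + A$2$2"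
  by (simp add: inner_vec_def sum_2 matrix_vector_mult_def algebra_simps)

lemma gen_pow_bound: "(j::nat) \<le> n \<Longrightarrow> even n \<Longrightarrow> \<bar>(x::real) ^ j\<bar> \<le> 1 + x ^ n"
proof (cases "\<bar>x\<bar> \<le> 1")
  case True
  assume "even n"
  have "\<bar>x^j\<bar> \<le> 1" using True by (simp add: power_le_one power_abs)
  moreover have "0 \<le> x^n" using \<open>even n\<close> by (simp add: zero_le_even_power)
  ultimately show ?thesis by linarith
next
  case False
  assume j: "j \<le> n" "even n"
  have "\<bar>x\<bar>^j \<le> \<bar>x\<bar>^n" using False j by (intro power_increasing) auto
  moreover have "\<bar>x\<bar>^n = x^n" using j(2) by (simp add: power_abs[symmetric] zero_le_even_power)
  ultimately show ?thesis by (simp add: power_abs)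
qed

lemma (in prob_space) integrable_low_pow_gen:
  fixes f :: "'a \<Rightarrow> real"
  assumes [measurable]: "f \<in> borel_measurable M" and i: "integrable M (\<lambda>x. f x ^ n)" and j: "j \<le> n" and e: "even n"
  shows "integrable M (\<lambda>x. f x ^ j)"
proof (rule Bochner_Integration.integrable_bound[where f="\<lambda>x. 1 + f x ^ n"])
  show "integrable M (\<lambda>x. 1 + f x ^ n)" using i by simp
  show "(\<lambda>x. f x ^ j) \<in> borel_measurable M" by measurable
  show "AE x in M. norm (f x ^ j) \<le> norm (1 + f x ^ n)"
    using gen_pow_bound[OF j e] e by (auto simp: zero_le_even_power)
qed

lemma cnt_meas: "X \<in> measurable M (count_space UNIV) \<Longrightarrow> (\<lambda>\<omega>. h (X \<omega>)) \<in> borel_measurable M"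
  by (rule measurable_compose[where N="count_space UNIV"]) auto

lemma (in prob_space) cov_quad:
  fixes X :: "'a \<Rightarrow> nat \<times> nat"
  assumes Xm: "X \<in> measurable M (count_space UNIV)"
    and i8: "integrable M (\<lambda>\<omega>. norm (vec2 (X \<omega>)) ^ 8)"
  shows "(cov_matrix M (\<lambda>\<omega>. vec2 (X \<omega>)) *v utilde) \<bullet> utilde =
           expectation (\<lambda>\<omega>. ((real (fst (X \<omega>)) - real (snd (X \<omega>)))
              - (expectation (\<lambda>\<omega>. real (fst (X \<omega>))) - expectation (\<lambda>\<omega>. real (snd (X \<omega>))))) ^ 2)"
    and "integral\<^sup>L M (\<lambda>\<omega>. vec2 (X \<omega>)) $ 1 = expectation (\<lambda>\<omega>. real (fst (X \<omega>)))"
    and "integral\<^sup>L M (\<lambda>\<omega>. vec2 (X \<omega>)) $ 2 = expectation (\<lambda>\<omega>. real (snd (X \<omega>)))"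
proof -
  define a where "a \<omega> = real (fst (X \<omega>))" for \<omega>
  define b where "b \<omega> = real (snd (X \<omega>))" for \<omega>
  have am[measurable]: "a \<in> borel_measurable M" unfolding a_def by (rule cnt_meas[OF Xm])
  have bm[measurable]: "b \<in> borel_measurable M" unfolding b_def by (rule cnt_meas[OF Xm])
  have nm[measurable]: "(\<lambda>\<omega>. norm (vec2 (X \<omega>))) \<in> borel_measurable M" by (rule cnt_meas[OF Xm])
  have vm[measurable]: "(\<lambda>\<omega>. vec2 (X \<omega>)) \<in> borel_measurable M" by (rule cnt_meas[OF Xm])
  have n2: "integrable M (\<lambda>\<omega>. norm (vec2 (X \<omega>)) ^ 2)"
    by (rule integrable_low_pow_gen[OF nm i8]) auto
  have n1: "integrable M (\<lambda>\<omega>. norm (vec2 (X \<omega>)) ^ 1)"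
    by (rule integrable_low_pow_gen[OF nm i8]) auto
  have vi: "integrable M (\<lambda>\<omega>. vec2 (X \<omega>))"
    using n1 integrable_norm_iff[OF vm] by simp
  show "integral\<^sup>L M (\<lambda>\<omega>. vec2 (X \<omega>)) $ 1 = expectation (\<lambda>\<omega>. real (fst (X \<omega>)))"
    using integral_bounded_linear[OF bounded_linear_vec_nth vi, of 1] by simp
  show "integral\<^sup>L M (\<lambda>\<omega>. vec2 (X \<omega>)) $ 2 = expectation (\<lambda>\<omega>. real (snd (X \<omega>)))"
    using integral_bounded_linear[OF bounded_linear_vec_nth vi, of 2] by simp
  have a2: "integrable M (\<lambda>\<omega>. a \<omega> ^ 2)"
  proof (rule Bochner_Integration.integrable_bound[OF n2])
    show "AE x in M. norm (a x ^ 2) \<le> norm (norm (vec2 (X x)) ^ 2)"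
      by (auto simp: norm_vec2_sq a_def)
  qed measurable
  have b2: "integrable M (\<lambda>\<omega>. b \<omega> ^ 2)"
  proof (rule Bochner_Integration.integrable_bound[OF n2])
    show "AE x in M. norm (b x ^ 2) \<le> norm (norm (vec2 (X x)) ^ 2)"
      by (auto simp: norm_vec2_sq b_def)
  qed measurable
  have a1: "integrable M a" using integrable_low_pow_gen[OF am a2, of 1] by simp
  have b1: "integrable M b" using integrable_low_pow_gen[OF bm b2, of 1] by simp
  define ma where "ma = expectation a"
  define mb where "mb = expectation b"
  define A where "A \<omega> = a \<omega> - ma" for \<omega>
  define B where "B \<omega> = b \<omega> - mb" for \<omega>
  have Am[measurable]: "A \<in> borel_measurable M" unfolding A_def by measurable
  have Bm[measurable]: "B \<in> borel_measurable M" unfolding B_def by measurable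
  have sq: "integrable M (\<lambda>\<omega>. (f \<omega> - c) ^ 2)" if "integrable M (\<lambda>\<omega>. f \<omega> ^ 2)" "integrable M f" for f :: "'a \<Rightarrow> real" and c :: real
  proof -
    have "(\<lambda>\<omega>. (f \<omega> - c) ^ 2) = (\<lambda>\<omega>. f \<omega> ^ 2 + ((-2 * c) * f \<omega> + c^2))"
      by (auto simp: power2_eq_square algebra_simps)
    then show ?thesis using that by simp
  qed
  have A2: "integrable M (\<lambda>\<omega>. A \<omega> ^ 2)" unfolding A_def using sq[OF a2 a1] .
  have B2: "integrable M (\<lambda>\<omega>. B \<omega> ^ 2)" unfolding B_def using sq[OF b2 b1] .
  have prodi: "integrable M (\<lambda>\<omega>. F \<omega> * G \<omega>)"
    if "integrable M (\<lambda>\<omega>. F \<omega> ^ 2)" "integrable M (\<lambda>\<omega>. G \<omega> ^ 2)"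
       "F \<in> borel_measurable M" "G \<in> borel_measurable M" for F G :: "'a \<Rightarrow> real"
  proof (rule Bochner_Integration.integrable_bound[where f="\<lambda>\<omega>. F \<omega> ^ 2 + G \<omega> ^ 2"])
    show "integrable M (\<lambda>\<omega>. F \<omega> ^ 2 + G \<omega> ^ 2)" using that by simp
    show "(\<lambda>\<omega>. F \<omega> * G \<omega>) \<in> borel_measurable M" using that by measurable
    show "AE x in M. norm (F x * G x) \<le> norm (F x ^ 2 + G x ^ 2)"
    proof (intro AE_I2)
      fix x
      have "2 * \<bar>F x * G x\<bar> \<le> F x ^ 2 + G x ^ 2"
        using sum_squares_ge_zero[of "\<bar>F x\<bar> - \<bar>G x\<bar>" 0]
        by (simp add: power2_eq_square algebra_simps abs_mult)
      moreover have "0 \<le> F x ^ 2 + G x ^ 2" by simp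
      ultimately show "norm (F x * G x) \<le> norm (F x ^ 2 + G x ^ 2)" by simp
    qed
  qed
  have AA: "integrable M (\<lambda>\<omega>. A \<omega> * A \<omega>)" by (rule prodi[OF A2 A2]) measurable
  have AB: "integrable M (\<lambda>\<omega>. A \<omega> * B \<omega>)" by (rule prodi[OF A2 B2]) measurable
  have BA: "integrable M (\<lambda>\<omega>. B \<omega> * A \<omega>)" by (rule prodi[OF B2 A2]) measurable
  have BB: "integrable M (\<lambda>\<omega>. B \<omega> * B \<omega>)" by (rule prodi[OF B2 B2]) measurable
  have cm: "cov_matrix M (\<lambda>\<omega>. vec2 (X \<omega>)) $ 1 $ 1 = expectation (\<lambda>\<omega>. A \<omega> * A \<omega>)"
       "cov_matrix M (\<lambda>\<omega>. vec2 (X \<omega>)) $ 1 $ 2 = expectation (\<lambda>\<omega>. A \<omega> * B \<omega>)"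
       "cov_matrix M (\<lambda>\<omega>. vec2 (X \<omega>)) $ 2 $ 1 = expectation (\<lambda>\<omega>. B \<omega> * A \<omega>)"
       "cov_matrix M (\<lambda>\<omega>. vec2 (X \<omega>)) $ 2 $ 2 = expectation (\<lambda>\<omega>. B \<omega> * B \<omega>)"
    by (simp_all add: cov_matrix_def A_def B_def ma_def mb_def a_def[abs_def] b_def[abs_def])
  have "(cov_matrix M (\<lambda>\<omega>. vec2 (X \<omega>)) *v utilde) \<bullet> utilde =
        expectation (\<lambda>\<omega>. A \<omega> * A \<omega>) - expectation (\<lambda>\<omega>. A \<omega> * B \<omega>)
          - expectation (\<lambda>\<omega>. B \<omega> * A \<omega>) + expectation (\<lambda>\<omega>. B \<omega> * B \<omega>)"
    by (simp add: quad_form cm)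
  also have "\<dots> = expectation (\<lambda>\<omega>. A \<omega> * A \<omega> - A \<omega> * B \<omega> - B \<omega> * A \<omega> + B \<omega> * B \<omega>)"
    using AA AB BA BB by (simp only: Bochner_Integration.integral_add Bochner_Integration.integral_diff Bochner_Integration.integrable_diff)
  also have "\<dots> = expectation (\<lambda>\<omega>. ((a \<omega> - b \<omega>) - (ma - mb)) ^ 2)"
    by (rule Bochner_Integration.integral_cong) (auto simp: A_def B_def power2_eq_square algebra_simps)
  finally show "(cov_matrix M (\<lambda>\<omega>. vec2 (X \<omega>)) *v utilde) \<bullet> utilde =
           expectation (\<lambda>\<omega>. ((real (fst (X \<omega>)) - real (snd (X \<omega>)))
              - (expectation (\<lambda>\<omega>. real (fst (X \<omega>))) - expectation (\<lambda>\<omega>. real (snd (X \<omega>))))) ^ 2)"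
    by (simp add: a_def[abs_def] b_def[abs_def] ma_def mb_def)
qed

lemma (in prob_space) AE_witness:
  assumes "AE \<omega> in M. P \<omega>" obtains \<omega> where "P \<omega>"
proof -
  have "\<exists>\<omega>. P \<omega>"
  proof (rule ccontr)
    assume "\<not> (\<exists>\<omega>. P \<omega>)"
    then have "AE \<omega> in M. False" using assms by (auto elim: AE_mp)
    then show False using AE_False emeasure_space_1 by simp
  qed
  then show ?thesis using that by blast
qed

lemma diff_sq_le: "((x::real) - y) ^ 2 \<le> 2 * (x ^ 2 + y ^ 2)"
  using zero_le_square[of "x + y"] by (simp add: power2_eq_square algebra_simps)

lemma (in prob_space) zero_var_eq:
  fixes X :: "'a \<Rightarrow> nat \<times> nat"
  assumes Xm: "X \<in> measurable M (count_space UNIV)"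
    and i8: "integrable M (\<lambda>\<omega>. norm (vec2 (X \<omega>)) ^ 8)"
    and mean: "integral\<^sup>L M (\<lambda>\<omega>. vec2 (X \<omega>)) = vector [a, b]"
    and ab: "\<bar>a - b\<bar> < 1"
    and q: "(cov_matrix M (\<lambda>\<omega>. vec2 (X \<omega>)) *v utilde) \<bullet> utilde = 0"
  shows "AE \<omega> in M. fst (X \<omega>) = snd (X \<omega>)"
proof -
  define D where "D \<omega> = real (fst (X \<omega>)) - real (snd (X \<omega>))" for \<omega>
  have Dm[measurable]: "D \<in> borel_measurable M" unfolding D_def by (rule cnt_meas[OF Xm])
  have nm[measurable]: "(\<lambda>\<omega>. norm (vec2 (X \<omega>))) \<in> borel_measurable M" by (rule cnt_meas[OF Xm])
  have ea: "expectation (\<lambda>\<omega>. real (fst (X \<omega>))) = a" using cov_quad(2)[OF Xm i8] mean by simp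
  have eb: "expectation (\<lambda>\<omega>. real (snd (X \<omega>))) = b" using cov_quad(3)[OF Xm i8] mean by simp
  have e0: "expectation (\<lambda>\<omega>. (D \<omega> - (a - b)) ^ 2) = 0"
    using cov_quad(1)[OF Xm i8] q ea eb by (simp add: D_def[abs_def])
  have n2: "integrable M (\<lambda>\<omega>. norm (vec2 (X \<omega>)) ^ 2)"
    by (rule integrable_low_pow_gen[OF nm i8]) auto
  have int: "integrable M (\<lambda>\<omega>. (D \<omega> - (a - b)) ^ 2)"
  proof (rule Bochner_Integration.integrable_bound[where f="\<lambda>\<omega>. 2 * (2 * norm (vec2 (X \<omega>)) ^ 2 + (a - b) ^ 2)"])
    show "integrable M (\<lambda>\<omega>. 2 * (2 * norm (vec2 (X \<omega>)) ^ 2 + (a - b) ^ 2))" using n2 by simp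
    show "(\<lambda>\<omega>. (D \<omega> - (a - b)) ^ 2) \<in> borel_measurable M" by measurable
    show "AE x in M. norm ((D x - (a - b)) ^ 2) \<le> norm (2 * (2 * norm (vec2 (X x)) ^ 2 + (a - b) ^ 2))"
    proof (intro AE_I2)
      fix x
      have "D x ^ 2 \<le> 2 * norm (vec2 (X x)) ^ 2"
        unfolding D_def norm_vec2_sq by (rule diff_sq_le)
      moreover have "(D x - (a - b)) ^ 2 \<le> 2 * (D x ^ 2 + (a - b) ^ 2)" by (rule diff_sq_le)
      ultimately show "norm ((D x - (a - b)) ^ 2) \<le> norm (2 * (2 * norm (vec2 (X x)) ^ 2 + (a - b) ^ 2))"
        by simp
    qed
  qed
  have "AE \<omega> in M. (D \<omega> - (a - b)) ^ 2 = 0"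
    using integral_nonneg_eq_0_iff_AE[OF int] e0 by simp
  then have aeD: "AE \<omega> in M. D \<omega> = a - b" by (auto elim: AE_mp)
  then obtain \<omega> where w: "D \<omega> = a - b" by (rule AE_witness)
  have "fst (X \<omega>) = snd (X \<omega>)"
  proof (rule ccontr)
    assume "fst (X \<omega>) \<noteq> snd (X \<omega>)"
    then have "1 \<le> \<bar>D \<omega>\<bar>" unfolding D_def by linarith
    then show False using w ab by simp
  qed
  then have "a - b = 0" using w by (simp add: D_def)
  then show ?thesis using aeD by (auto simp: D_def elim!: AE_mp)
qed

lemma AE_transfer:
  assumes X: "X \<in> measurable M (count_space UNIV)" and Y: "Y \<in> measurable M (count_space UNIV)"
    and d: "distr M (count_space UNIV) X = distr M (count_space UNIV) Y"
    and ae: "AE \<omega> in M. P (Y \<omega>)"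
  shows "AE \<omega> in M. P (X \<omega>)"
proof -
  have "AE x in distr M (count_space UNIV) Y. P x" using AE_distr_iff[OF Y, of P] ae by simp
  then have "AE x in distr M (count_space UNIV) X. P x" unfolding d .
  then show ?thesis using AE_distr_iff[OF X, of P] by simp
qed

lemma gwi_diff:
  assumes "\<And>j. j \<ge> 1 \<Longrightarrow> fst (\<xi>1 (Suc k) j \<omega>) = snd (\<xi>1 (Suc k) j \<omega>)"
    and "\<And>j. j \<ge> 1 \<Longrightarrow> fst (\<xi>2 (Suc k) j \<omega>) = snd (\<xi>2 (Suc k) j \<omega>)"
  shows "real (fst (gwi \<xi>1 \<xi>2 \<epsilon> (Suc k) \<omega>)) - real (snd (gwi \<xi>1 \<xi>2 \<epsilon> (Suc k) \<omega>))
           = real (fst (\<epsilon> (Suc k) \<omega>)) - real (snd (\<epsilon> (Suc k) \<omega>))"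
proof -
  obtain m n where mn: "gwi \<xi>1 \<xi>2 \<epsilon> k \<omega> = (m, n)" by (cases "gwi \<xi>1 \<xi>2 \<epsilon> k \<omega>")
  have s1: "(\<Sum>j\<in>{1..m}. fst (\<xi>1 (Suc k) j \<omega>)) = (\<Sum>j\<in>{1..m}. snd (\<xi>1 (Suc k) j \<omega>))"
    using assms(1) by (intro sum.cong) auto
  have s2: "(\<Sum>j\<in>{1..n}. fst (\<xi>2 (Suc k) j \<omega>)) = (\<Sum>j\<in>{1..n}. snd (\<xi>2 (Suc k) j \<omega>))"
    using assms(2) by (intro sum.cong) auto
  define A where "A = (\<Sum>j\<in>{1..m}. snd (\<xi>1 (Suc k) j \<omega>)) + (\<Sum>j\<in>{1..n}. snd (\<xi>2 (Suc k) j \<omega>))"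
  have "fst (gwi \<xi>1 \<xi>2 \<epsilon> (Suc k) \<omega>) = A + fst (\<epsilon> (Suc k) \<omega>)"
    using s1 s2 by (simp add: mn Let_def A_def)
  moreover have "snd (gwi \<xi>1 \<xi>2 \<epsilon> (Suc k) \<omega>) = A + snd (\<epsilon> (Suc k) \<omega>)"
    by (simp add: mn Let_def A_def)
  ultimately show ?thesis by simp
qed

theorem lemmaA3:
  fixes M :: "'a measure"
    and \<xi>1 \<xi>2 :: "nat \<Rightarrow> nat \<Rightarrow> 'a \<Rightarrow> nat \<times> nat"
    and \<epsilon> :: "nat \<Rightarrow> 'a \<Rightarrow> nat \<times> nat"
    and \<alpha> \<beta> :: real
  assumes P: "prob_space M"
    and indep: "prob_space.indep_vars M (\<lambda>_. count_space UNIV) (gwi_family \<xi>1 \<xi>2 \<epsilon>) gwi_index"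
    and id1: "\<And>k j. k \<ge> 1 \<Longrightarrow> j \<ge> 1 \<Longrightarrow>
                distr M (count_space UNIV) (\<xi>1 k j) = distr M (count_space UNIV) (\<xi>1 1 1)"
    and id2: "\<And>k j. k \<ge> 1 \<Longrightarrow> j \<ge> 1 \<Longrightarrow>
                distr M (count_space UNIV) (\<xi>2 k j) = distr M (count_space UNIV) (\<xi>2 1 1)"
    and id3: "\<And>k. k \<ge> 1 \<Longrightarrow>
                distr M (count_space UNIV) (\<epsilon> k) = distr M (count_space UNIV) (\<epsilon> 1)"
    and ab: "0 < \<alpha>" "\<alpha> < 1" "0 < \<beta>" "\<beta> < 1" "\<alpha> + \<beta> = 1"
    and mean1: "integral\<^sup>L M (\<lambda>\<omega>. vec2 (\<xi>1 1 1 \<omega>)) = vector [\<alpha>, \<beta>]"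
    and mean2: "integral\<^sup>L M (\<lambda>\<omega>. vec2 (\<xi>2 1 1 \<omega>)) = vector [\<beta>, \<alpha>]"
    and mom1: "integrable M (\<lambda>\<omega>. norm (vec2 (\<xi>1 1 1 \<omega>)) ^ 8)"
    and mom2: "integrable M (\<lambda>\<omega>. norm (vec2 (\<xi>2 1 1 \<omega>)) ^ 8)"
    and mom3: "integrable M (\<lambda>\<omega>. norm (vec2 (\<epsilon> 1 \<omega>)) ^ 8)"
    and imm: "integral\<^sup>L M (\<lambda>\<omega>. vec2 (\<epsilon> 1 \<omega>)) \<noteq> 0"
    and crit: "((1/2) *\<^sub>R (cov_matrix M (\<lambda>\<omega>. vec2 (\<xi>1 1 1 \<omega>)) + cov_matrix M (\<lambda>\<omega>. vec2 (\<xi>2 1 1 \<omega>)))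
                  *v utilde) \<bullet> utilde = 0"
  shows "(AE \<omega> in M. (\<lambda>n. (\<Sum>k\<in>{1..n}. (real (fst (gwi \<xi>1 \<xi>2 \<epsilon> k \<omega>))
                                         - real (snd (gwi \<xi>1 \<xi>2 \<epsilon> k \<omega>))) ^ 2) / real n)
            \<longlonglongrightarrow> integral\<^sup>L M (\<lambda>\<omega>. (utilde \<bullet> vec2 (\<epsilon> 1 \<omega>)) ^ 2))
         \<and> (integral\<^sup>L M (\<lambda>\<omega>. (utilde \<bullet> vec2 (\<epsilon> 1 \<omega>)) ^ 2) = 0 \<longleftrightarrow>
         (\<forall>k\<ge>1. AE \<omega> in M. fst (gwi \<xi>1 \<xi>2 \<epsilon> k \<omega>) = snd (gwi \<xi>1 \<xi>2 \<epsilon> k \<omega>)))"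
proof -
  interpret prob_space M by (rule P)
  have mf: "gwi_family \<xi>1 \<xi>2 \<epsilon> x \<in> measurable M (count_space UNIV)" if "x \<in> gwi_index" for x
    using indep that by (auto simp: indep_vars_def)
  have m1: "\<xi>1 k j \<in> measurable M (count_space UNIV)" if "k \<ge> 1" "j \<ge> 1" for k j
    using mf[of "Inl (k, j, 1)"] that by (auto simp: gwi_index_def gwi_family_def)
  have m2: "\<xi>2 k j \<in> measurable M (count_space UNIV)" if "k \<ge> 1" "j \<ge> 1" for k j
    using mf[of "Inl (k, j, 2)"] that by (auto simp: gwi_index_def gwi_family_def)
  have m3: "\<epsilon> k \<in> measurable M (count_space UNIV)" if "k \<ge> 1" for k
    using mf[of "Inr k"] that by (auto simp: gwi_index_def gwi_family_def)
  have m11: "\<xi>1 1 1 \<in> measurable M (count_space UNIV)" using m1[of 1 1] by simp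
  have m21: "\<xi>2 1 1 \<in> measurable M (count_space UNIV)" using m2[of 1 1] by simp
  have m31: "\<epsilon> 1 \<in> measurable M (count_space UNIV)" using m3[of 1] by simp
  define q1 where "q1 = (cov_matrix M (\<lambda>\<omega>. vec2 (\<xi>1 1 1 \<omega>)) *v utilde) \<bullet> utilde"
  define q2 where "q2 = (cov_matrix M (\<lambda>\<omega>. vec2 (\<xi>2 1 1 \<omega>)) *v utilde) \<bullet> utilde"
  have "q1 + q2 = 0" using crit by (simp add: q1_def q2_def quad_form algebra_simps)
  moreover have "0 \<le> q1" unfolding q1_def cov_quad(1)[OF m11 mom1] by simp
  moreover have "0 \<le> q2" unfolding q2_def cov_quad(1)[OF m21 mom2] by simp
  ultimately have q1: "q1 = 0" and q2: "q2 = 0" by linarith+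
  have ae1: "AE \<omega> in M. fst (\<xi>1 1 1 \<omega>) = snd (\<xi>1 1 1 \<omega>)"
    by (rule zero_var_eq[OF m11 mom1 mean1 _ q1[unfolded q1_def]]) (use ab in auto)
  have ae2: "AE \<omega> in M. fst (\<xi>2 1 1 \<omega>) = snd (\<xi>2 1 1 \<omega>)"
    by (rule zero_var_eq[OF m21 mom2 mean2 _ q2[unfolded q2_def]]) (use ab in auto)
  have "AE \<omega> in M. \<forall>p::nat\<times>nat. fst p \<ge> 1 \<longrightarrow> snd p \<ge> 1 \<longrightarrow>
          fst (\<xi>1 (fst p) (snd p) \<omega>) = snd (\<xi>1 (fst p) (snd p) \<omega>) \<and>
          fst (\<xi>2 (fst p) (snd p) \<omega>) = snd (\<xi>2 (fst p) (snd p) \<omega>)"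
  proof (rule AE_all_countable[THEN iffD2], intro allI)
    fix p :: "nat \<times> nat"
    show "AE \<omega> in M. fst p \<ge> 1 \<longrightarrow> snd p \<ge> 1 \<longrightarrow>
          fst (\<xi>1 (fst p) (snd p) \<omega>) = snd (\<xi>1 (fst p) (snd p) \<omega>) \<and>
          fst (\<xi>2 (fst p) (snd p) \<omega>) = snd (\<xi>2 (fst p) (snd p) \<omega>)"
    proof (cases "fst p \<ge> 1 \<and> snd p \<ge> 1")
      case True
      have "AE \<omega> in M. fst (\<xi>1 (fst p) (snd p) \<omega>) = snd (\<xi>1 (fst p) (snd p) \<omega>)"
        using AE_transfer[where X="\<xi>1 (fst p) (snd p)" and Y="\<xi>1 1 1" and P="\<lambda>x. fst x = snd x", OF m1 m11 id1] True ae1 by simp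
      moreover have "AE \<omega> in M. fst (\<xi>2 (fst p) (snd p) \<omega>) = snd (\<xi>2 (fst p) (snd p) \<omega>)"
        using AE_transfer[where X="\<xi>2 (fst p) (snd p)" and Y="\<xi>2 1 1" and P="\<lambda>x. fst x = snd x", OF m2 m21 id2] True ae2 by simp
      ultimately show ?thesis by eventually_elim auto
    qed auto
  qed
  then have aek: "AE \<omega> in M. \<forall>k. real (fst (gwi \<xi>1 \<xi>2 \<epsilon> (Suc k) \<omega>)) - real (snd (gwi \<xi>1 \<xi>2 \<epsilon> (Suc k) \<omega>))
           = real (fst (\<epsilon> (Suc k) \<omega>)) - real (snd (\<epsilon> (Suc k) \<omega>))"
  proof (rule AE_mp, intro AE_I2 impI allI)
    fix \<omega> k
    assume H: "\<forall>p::nat\<times>nat. fst p \<ge> 1 \<longrightarrow> snd p \<ge> 1 \<longrightarrow>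
          fst (\<xi>1 (fst p) (snd p) \<omega>) = snd (\<xi>1 (fst p) (snd p) \<omega>) \<and>
          fst (\<xi>2 (fst p) (snd p) \<omega>) = snd (\<xi>2 (fst p) (snd p) \<omega>)"
    show "real (fst (gwi \<xi>1 \<xi>2 \<epsilon> (Suc k) \<omega>)) - real (snd (gwi \<xi>1 \<xi>2 \<epsilon> (Suc k) \<omega>))
           = real (fst (\<epsilon> (Suc k) \<omega>)) - real (snd (\<epsilon> (Suc k) \<omega>))"
      by (rule gwi_diff) (use H[rule_format, of "(Suc k, _)"] in auto)
  qed
  define W where "W k \<omega> = (utilde \<bullet> vec2 (\<epsilon> (Suc k) \<omega>)) ^ 2" for k \<omega>
  define h where "h p = (utilde \<bullet> vec2 p) ^ 2" for p
  have hm: "h \<in> measurable (count_space UNIV) borel" by simp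
  have indE: "indep_vars (\<lambda>_. count_space UNIV) (\<lambda>k. gwi_family \<xi>1 \<xi>2 \<epsilon> (Inr (Suc k))) UNIV"
    using indep_vars_reindex[OF indep, of "\<lambda>k. Inr (Suc k)" UNIV]
    by (auto simp: gwi_index_def inj_on_def)
  have indW: "indep_vars (\<lambda>_. borel) W UNIV"
    using indep_vars_compose2[OF indE, of "\<lambda>_. h" "\<lambda>_. borel"] hm
    by (simp add: W_def[abs_def] h_def gwi_family_def)
  have Wd: "W k = (\<lambda>\<omega>. h (\<epsilon> (Suc k) \<omega>))" for k by (simp add: W_def[abs_def] h_def)
  have iddW: "distr M borel (W k) = distr M borel (W 0)" for k
  proof -
    have "distr M borel (W k) = distr (distr M (count_space UNIV) (\<epsilon> (Suc k))) borel h"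
      unfolding Wd by (subst distr_distr[OF hm m3]) (auto simp: o_def)
    also have "\<dots> = distr (distr M (count_space UNIV) (\<epsilon> 1)) borel h"
      using id3[of "Suc k"] by simp
    also have "\<dots> = distr M borel (W 0)"
      unfolding Wd by (subst distr_distr[OF hm m3]) (auto simp: o_def)
    finally show ?thesis .
  qed
  have nm3[measurable]: "(\<lambda>\<omega>. norm (vec2 (\<epsilon> 1 \<omega>))) \<in> borel_measurable M" by (rule cnt_meas[OF m31])
  have W0m[measurable]: "W 0 \<in> borel_measurable M" unfolding Wd using cnt_meas[OF m31, of h] by simp
  have Wle: "W 0 \<omega> \<le> 2 * norm (vec2 (\<epsilon> 1 \<omega>)) ^ 2" for \<omega>
    unfolding W_def utilde_inner norm_vec2_sq using diff_sq_le by (simp add: distrib_left)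
  have int4: "integrable M (\<lambda>\<omega>. W 0 \<omega> ^ 4)"
  proof (rule Bochner_Integration.integrable_bound[where f="\<lambda>\<omega>. 16 * norm (vec2 (\<epsilon> 1 \<omega>)) ^ 8"])
    show "integrable M (\<lambda>\<omega>. 16 * norm (vec2 (\<epsilon> 1 \<omega>)) ^ 8)" using mom3 by simp
    show "(\<lambda>\<omega>. W 0 \<omega> ^ 4) \<in> borel_measurable M" by measurable
    show "AE x in M. norm (W 0 x ^ 4) \<le> norm (16 * norm (vec2 (\<epsilon> 1 x)) ^ 8)"
    proof (intro AE_I2)
      fix x
      have W0nn: "0 \<le> W 0 x" by (simp add: W_def)
      have "W 0 x ^ 4 \<le> (2 * norm (vec2 (\<epsilon> 1 x)) ^ 2) ^ 4" by (rule power_mono[OF Wle W0nn])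
      also have "\<dots> = 16 * norm (vec2 (\<epsilon> 1 x)) ^ 8" by (simp add: power_mult_distrib power_mult[symmetric])
      finally show "norm (W 0 x ^ 4) \<le> norm (16 * norm (vec2 (\<epsilon> 1 x)) ^ 8)"
        using W0nn by (simp add: zero_le_even_power)
    qed
  qed
  have slln: "AE \<omega> in M. (\<lambda>n. (\<Sum>k<n. W k \<omega>) / real n) \<longlonglongrightarrow> expectation (W 0)"
    by (rule slln4[OF indW iddW int4])
  have EW: "expectation (W 0) = integral\<^sup>L M (\<lambda>\<omega>. (utilde \<bullet> vec2 (\<epsilon> 1 \<omega>)) ^ 2)"
    by (simp add: W_def[abs_def])
  have part1: "AE \<omega> in M. (\<lambda>n. (\<Sum>k\<in>{1..n}. (real (fst (gwi \<xi>1 \<xi>2 \<epsilon> k \<omega>))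
                                         - real (snd (gwi \<xi>1 \<xi>2 \<epsilon> k \<omega>))) ^ 2) / real n)
            \<longlonglongrightarrow> integral\<^sup>L M (\<lambda>\<omega>. (utilde \<bullet> vec2 (\<epsilon> 1 \<omega>)) ^ 2)"
    using aek slln
  proof eventually_elim
    case (elim \<omega>)
    have "(\<Sum>k\<in>{1..n}. (real (fst (gwi \<xi>1 \<xi>2 \<epsilon> k \<omega>)) - real (snd (gwi \<xi>1 \<xi>2 \<epsilon> k \<omega>))) ^ 2)
          = (\<Sum>k<n. W k \<omega>)" for n
    proof -
      have "(\<Sum>k\<in>{1..n}. (real (fst (gwi \<xi>1 \<xi>2 \<epsilon> k \<omega>)) - real (snd (gwi \<xi>1 \<xi>2 \<epsilon> k \<omega>))) ^ 2)
          = (\<Sum>k<n. (real (fst (gwi \<xi>1 \<xi>2 \<epsilon> (Suc k) \<omega>)) - real (snd (gwi \<xi>1 \<xi>2 \<epsilon> (Suc k) \<omega>))) ^ 2)"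
        using sum.atLeast1_atMost_eq[of "\<lambda>k. (real (fst (gwi \<xi>1 \<xi>2 \<epsilon> k \<omega>)) - real (snd (gwi \<xi>1 \<xi>2 \<epsilon> k \<omega>))) ^ 2" n]
        by simp
      also have "\<dots> = (\<Sum>k<n. W k \<omega>)"
        using elim(1) by (simp add: W_def utilde_inner)
      finally show ?thesis .
    qed
    then show ?case using elim(2) EW by simp
  qed
  have part2: "integral\<^sup>L M (\<lambda>\<omega>. (utilde \<bullet> vec2 (\<epsilon> 1 \<omega>)) ^ 2) = 0 \<longleftrightarrow>
         (\<forall>k\<ge>1. AE \<omega> in M. fst (gwi \<xi>1 \<xi>2 \<epsilon> k \<omega>) = snd (gwi \<xi>1 \<xi>2 \<epsilon> k \<omega>))"
  proof
    assume I0: "integral\<^sup>L M (\<lambda>\<omega>. (utilde \<bullet> vec2 (\<epsilon> 1 \<omega>)) ^ 2) = 0"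
    have W0i: "integrable M (W 0)"
      using integrable_low_pow_gen[OF W0m int4, of 1] by simp
    have "AE \<omega> in M. W 0 \<omega> = 0"
      using integral_nonneg_eq_0_iff_AE[OF W0i] I0 EW by (simp add: W_def)
    then have e1: "AE \<omega> in M. fst (\<epsilon> 1 \<omega>) = snd (\<epsilon> 1 \<omega>)"
      by (auto simp: W_def utilde_inner elim!: AE_mp)
    show "\<forall>k\<ge>1. AE \<omega> in M. fst (gwi \<xi>1 \<xi>2 \<epsilon> k \<omega>) = snd (gwi \<xi>1 \<xi>2 \<epsilon> k \<omega>)"
    proof (intro allI impI)
      fix k :: nat assume k: "k \<ge> 1"
      then obtain k' where k': "k = Suc k'" by (cases k) auto
      have "AE \<omega> in M. fst (\<epsilon> k \<omega>) = snd (\<epsilon> k \<omega>)"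
        using AE_transfer[where X="\<epsilon> k" and Y="\<epsilon> 1" and P="\<lambda>x. fst x = snd x", OF m3 m31 id3] k e1 by simp
      then show "AE \<omega> in M. fst (gwi \<xi>1 \<xi>2 \<epsilon> k \<omega>) = snd (gwi \<xi>1 \<xi>2 \<epsilon> k \<omega>)"
        using aek
      proof eventually_elim
        case (elim \<omega>)
        then show ?case using elim(2)[rule_format, of k'] k' by simp
      qed
    qed
  next
    assume H: "\<forall>k\<ge>1. AE \<omega> in M. fst (gwi \<xi>1 \<xi>2 \<epsilon> k \<omega>) = snd (gwi \<xi>1 \<xi>2 \<epsilon> k \<omega>)"
    have "AE \<omega> in M. fst (gwi \<xi>1 \<xi>2 \<epsilon> 1 \<omega>) = snd (gwi \<xi>1 \<xi>2 \<epsilon> 1 \<omega>)" using H[rule_format, of 1] by simp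
    then have "AE \<omega> in M. (utilde \<bullet> vec2 (\<epsilon> 1 \<omega>)) ^ 2 = 0"
      by (auto simp: utilde_inner elim!: AE_mp)
    then have "integral\<^sup>L M (\<lambda>\<omega>. (utilde \<bullet> vec2 (\<epsilon> 1 \<omega>)) ^ 2) = integral\<^sup>L M (\<lambda>\<omega>. 0::real)"
      using cnt_meas[OF m31, of "\<lambda>p. (utilde \<bullet> vec2 p) ^ 2"] by (intro integral_cong_AE) auto
    then show "integral\<^sup>L M (\<lambda>\<omega>. (utilde \<bullet> vec2 (\<epsilon> 1 \<omega>)) ^ 2) = 0" by simp
  qed
  show ?thesis using part1 part2 by blast
qed

end
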